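(* Let $X$ be an $n\times n$ Boolean matrix with $X=X^*$, let $i\in\{1,\dots,n\}$, and let $\Delta X$ be an $n\times n$ Boolean matrix that is $i$-transitive and $i$-complete with respect to $X$. Then $$X+\Delta X=(X+I_{\Delta X,i}+J_{\Delta X,i})^2.$$
   Context: Boolean matrices have entries in $\{0,1\}$. $+$ is the entrywise OR and the product is the Boolean product. $X^*=\sum_{k\ge0}X^k$ with $X^0=I_n$ is the Kleene closure. For a Boolean matrix $M$, $I_{M,i}$ denotes the matrix equal to $M$ in row $i$ and zero elsewhere, and $J_{M,i}$ denotes the matrix equal to $M$ in column $i$ and zero elsewhere. $\Delta X$ is $i$-transitive with respect to $X$ if $I_{\Delta X,i}=I_{\Delta X,i}\cdot X$ and $J_{\Delta X,i}=X\cdot J_{\Delta X,i}$. $\Delta X$ is $i$-complete with respect to $X$ if $\Delta X=J_{\Delta X,i}\cdot I_{\Delta X,i}+X\cdot I_{\Delta X,i}+J_{\Delta X,i}\cdot X$. *)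

theory Defs
  imports Main
begin

text \<open>n x n Boolean matrices, indexed by a finite type 'n (with CARD('n) = n).\<close>
type_synonym 'n bmat = "'n \<Rightarrow> 'n \<Rightarrow> bool"

definition bplus :: "'n bmat \<Rightarrow> 'n bmat \<Rightarrow> 'n bmat" (infixl "\<oplus>\<^sub>B" 65) where
  "A \<oplus>\<^sub>B B = (\<lambda>r c. A r c \<or> B r c)"

definition btimes :: "'n bmat \<Rightarrow> 'n bmat \<Rightarrow> 'n bmat" (infixl "\<otimes>\<^sub>B" 70) where
  "A \<otimes>\<^sub>B B = (\<lambda>r c. \<exists>k. A r k \<and> B k c)"

definition bid :: "'n bmat" where
  "bid = (\<lambda>r c. r = c)"

fun bpow :: "'n bmat \<Rightarrow> nat \<Rightarrow> 'n bmat" where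
  "bpow X 0 = bid"
| "bpow X (Suc k) = bpow X k \<otimes>\<^sub>B X"

definition bstar :: "'n bmat \<Rightarrow> 'n bmat" where
  "bstar X = (\<lambda>r c. \<exists>k. bpow X k r c)"

definition Irow :: "'n bmat \<Rightarrow> 'n \<Rightarrow> 'n bmat" where
  "Irow M i = (\<lambda>r c. r = i \<and> M r c)"

definition Jcol :: "'n bmat \<Rightarrow> 'n \<Rightarrow> 'n bmat" where
  "Jcol M i = (\<lambda>r c. c = i \<and> M r c)"

definition i_transitive :: "'n bmat \<Rightarrow> 'n \<Rightarrow> 'n bmat \<Rightarrow> bool" where
  "i_transitive D i X \<longleftrightarrow> Irow D i = Irow D i \<otimes>\<^sub>B X \<and> Jcol D i = X \<otimes>\<^sub>B Jcol D i"

definition i_complete :: "'n bmat \<Rightarrow> 'n \<Rightarrow> 'n bmat \<Rightarrow> bool" where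
  "i_complete D i X \<longleftrightarrow>
     D = (Jcol D i \<otimes>\<^sub>B Irow D i) \<oplus>\<^sub>B (X \<otimes>\<^sub>B Irow D i) \<oplus>\<^sub>B (Jcol D i \<otimes>\<^sub>B X)"

end

theory Submission
  imports Defs
begin

lemma bpow_add: "bpow X m r k \<Longrightarrow> bpow X n k c \<Longrightarrow> bpow X (m + n) r c"
proof (induction n arbitrary: c)
  case 0 then show ?case by (auto simp: bid_def)
next
  case (Suc n)
  then obtain j where "bpow X n k j" "X j c" by (auto simp: btimes_def)
  with Suc show ?case by (auto simp: btimes_def)
qed

lemma star_refl: "bstar X r r"
  unfolding bstar_def by (rule exI[of _ 0]) (simp add: bid_def)

lemma star_trans: "bstar X r k \<Longrightarrow> bstar X k c \<Longrightarrow> bstar X r c"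
  unfolding bstar_def using bpow_add by meson

theorem mainTheorem12:
  fixes X D :: "('n::finite) bmat" and i :: 'n
  assumes "X = bstar X"
    and "i_transitive D i X"
    and "i_complete D i X"
  shows "X \<oplus>\<^sub>B D = bpow (X \<oplus>\<^sub>B Irow D i \<oplus>\<^sub>B Jcol D i) 2"
proof -
  have refl: "\<And>r. X r r" using star_refl assms(1) by metis
  have trans: "\<And>r k c. X r k \<Longrightarrow> X k c \<Longrightarrow> X r c" using star_trans assms(1) by metis
  have T1: "\<And>c. D i c \<longleftrightarrow> (\<exists>k. D i k \<and> X k c)"
    using assms(2) unfolding i_transitive_def Irow_def btimes_def fun_eq_iff by metis
  have T2: "\<And>r. D r i \<longleftrightarrow> (\<exists>k. X r k \<and> D k i)"
    using assms(2) unfolding i_transitive_def Jcol_def btimes_def fun_eq_iff by metis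
  have C: "\<And>r c. D r c \<longleftrightarrow> (D r i \<and> D i c) \<or> (X r i \<and> D i c) \<or> (D r i \<and> X i c)"
    using assms(3) unfolding i_complete_def Jcol_def Irow_def btimes_def bplus_def fun_eq_iff
    by (metis (no_types, lifting))
  define M where "M = X \<oplus>\<^sub>B Irow D i \<oplus>\<^sub>B Jcol D i"
  have Mrc: "\<And>r c. M r c \<longleftrightarrow> X r c \<or> (r = i \<and> D r c) \<or> (c = i \<and> D r c)"
    unfolding M_def bplus_def Irow_def Jcol_def by simp
  have two: "(2::nat) = Suc (Suc 0)" by simp
  have P: "\<And>r c. bpow M 2 r c \<longleftrightarrow> (\<exists>k. M r k \<and> M k c)"
    unfolding two bpow.simps btimes_def bid_def by simp
  have "X r c \<or> D r c \<longleftrightarrow> (\<exists>k. M r k \<and> M k c)" for r c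
  proof
    assume "X r c \<or> D r c"
    then show "\<exists>k. M r k \<and> M k c"
    proof
      assume "X r c" then show ?thesis using refl Mrc by blast
    next
      assume "D r c"
      then have "(D r i \<and> D i c) \<or> (X r i \<and> D i c) \<or> (D r i \<and> X i c)" using C by blast
      then show ?thesis using Mrc by blast
    qed
  next
    assume "\<exists>k. M r k \<and> M k c"
    then obtain k where k: "X r k \<or> (r = i \<and> D r k) \<or> (k = i \<and> D r k)"
      and k2: "X k c \<or> (k = i \<and> D k c) \<or> (c = i \<and> D k c)" using Mrc by blast
    show "X r c \<or> D r c"
      using k k2 C[of r c] T1 T2 trans refl by metis
  qed
  then have "X \<oplus>\<^sub>B D = bpow M 2" unfolding fun_eq_iff P bplus_def by simp
  then show ?thesis unfolding M_def .
qed

end
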